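(* Let $N\ge 2$ be an integer, let $m_N=\min\{m\ge1: d(m)=N\}$, and write $m_N=p_1^{\alpha_1}\cdots p_r^{\alpha_r}$ with all $\alpha_i\ge1$. Then for every integer $k\ge 1$ and every $j\in\{1,\dots,r\}$: if $p_j>p_{r+1}^{1/2^k}$, then $\Omega(\alpha_j+1)\le k$.
   Context: $d(m)$ is the number of positive divisors of $m$. $p_j$ denotes the $j$-th smallest prime. $\Omega(n)$ denotes the number of prime factors of $n$ counted with multiplicity (the number of prime power divisors). The primes dividing $m_N$ are exactly $p_1,\dots,p_r$ (the exponents of $m_N$ are nonincreasing in the prime). *)

theory Defs
  imports Complex_Main "HOL-Library.Infinite_Set" "HOL-Computational_Algebra.Primes"
begin

definition ndivisors :: "nat \<Rightarrow> nat" where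
  "ndivisors m = card {d. d dvd m}"

text \<open>p_j: the j-th smallest prime, 1-indexed (p_1 = 2).\<close>
definition nth_prime :: "nat \<Rightarrow> nat" where
  "nth_prime j = enumerate {p. prime p} (j - 1)"

definition bigOmega :: "nat \<Rightarrow> nat" where
  "bigOmega n = size (prime_factorization n)"

definition mN :: "nat \<Rightarrow> nat" where
  "mN N = (LEAST m. m \<ge> 1 \<and> ndivisors m = N)"

end

theory Submission
  imports Defs
begin

lemma nd_mult:
  fixes a b :: nat
  assumes "coprime a b" "a > 0" "b > 0"
  shows "ndivisors (a * b) = ndivisors a * ndivisors b"
proof -
  let ?f = "\<lambda>(x,y). x * (y::nat)"
  have "bij_betw ?f ({x. x dvd a} \<times> {y. y dvd b}) {d. d dvd a * b}"
  proof (rule bij_betwI')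
    fix xy xy' assume xy: "xy \<in> {x. x dvd a} \<times> {y. y dvd b}" and xy': "xy' \<in> {x. x dvd a} \<times> {y. y dvd b}"
    obtain x y where [simp]: "xy = (x,y)" by (cases xy)
    obtain x' y' where [simp]: "xy' = (x',y')" by (cases xy')
    have dx: "x dvd a" "y dvd b" "x' dvd a" "y' dvd b" using xy xy' by auto
    have c1: "coprime a y" "coprime a y'"
      using coprime_divisors[OF dvd_refl dx(2) assms(1)] coprime_divisors[OF dvd_refl dx(4) assms(1)] by auto
    have ba: "coprime b a" using assms(1) by (simp add: coprime_commute)
    have c2: "coprime b x" "coprime b x'"
      using coprime_divisors[OF dvd_refl dx(1) ba] coprime_divisors[OF dvd_refl dx(3) ba] by auto
    show "(?f xy = ?f xy') = (xy = xy')"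
    proof
      assume h: "?f xy = ?f xy'"
      hence e: "x * y = x' * y'" by simp
      have g1: "gcd (x*y) a = gcd x a" by (rule gcd_mult_left_right_cancel[OF c1(1)])
      have g2: "gcd (x'*y') a = gcd x' a" by (rule gcd_mult_left_right_cancel[OF c1(2)])
      have "gcd x a = x" "gcd x' a = x'" using dx by (simp_all add: gcd_nat.absorb1)
      hence "x = x'" using g1 g2 e by simp
      have g3: "gcd (y*x) b = gcd y b" by (rule gcd_mult_left_right_cancel[OF c2(1)])
      have g4: "gcd (y'*x') b = gcd y' b" by (rule gcd_mult_left_right_cancel[OF c2(2)])
      have "gcd y b = y" "gcd y' b = y'" using dx by (simp_all add: gcd_nat.absorb1)
      hence "y = y'" using g3 g4 e by (simp add: mult.commute)
      with \<open>x = x'\<close> show "xy = xy'" by simp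
    qed simp
  next
    fix xy assume "xy \<in> {x. x dvd a} \<times> {y. y dvd b}"
    then show "?f xy \<in> {d. d dvd a * b}" by (auto intro: mult_dvd_mono)
  next
    fix d assume "d \<in> {d. d dvd a * b}"
    then obtain x y where "d = x * y" "x dvd a" "y dvd b" using division_decomp by blast
    then show "\<exists>xy \<in> {x. x dvd a} \<times> {y. y dvd b}. d = ?f xy" by auto
  qed
  hence "card {d. d dvd a * b} = card ({x. x dvd a} \<times> {y. y dvd b})"
    by (simp add: bij_betw_same_card)
  thus ?thesis unfolding ndivisors_def by (simp add: card_cartesian_product)
qed

lemma nd_primepow:
  fixes p :: nat
  assumes "prime p"
  shows "ndivisors (p ^ e) = e + 1"
proof -
  have "{d. d dvd p ^ e} = (\<lambda>i. p ^ i) ` {..e}"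
    using divides_primepow_nat[OF assms] by auto
  moreover have "inj_on (\<lambda>i. p ^ i) {..e}"
    using assms prime_gt_1_nat by (auto intro!: inj_onI simp: power_inject_exp)
  ultimately show ?thesis unfolding ndivisors_def by (simp add: card_image)
qed

lemma omega_split:
  "\<forall>n::nat. k + 1 \<le> bigOmega n \<longrightarrow> (\<exists>u v. n = u * v \<and> 2 ^ k \<le> u \<and> v \<ge> 2)"
proof (induction k)
  case 0
  show ?case
  proof (intro allI impI)
    fix n :: nat assume h: "0 + 1 \<le> bigOmega n"
    have "n \<noteq> 0" using h unfolding bigOmega_def by (cases "n = 0") auto
    have "n \<noteq> 1" using h unfolding bigOmega_def by (cases "n = 1") auto
    with \<open>n \<noteq> 0\<close> show "\<exists>u v. n = u * v \<and> 2 ^ 0 \<le> u \<and> v \<ge> 2" by (intro exI[of _ 1] exI[of _ n]) auto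
  qed
next
  case (Suc k)
  show ?case
  proof (intro allI impI)
    fix n :: nat assume h: "Suc k + 1 \<le> bigOmega n"
    have "n \<noteq> 0" using h unfolding bigOmega_def by (cases "n = 0") auto
    have "n \<noteq> 1" using h unfolding bigOmega_def by (cases "n = 1") auto
    then obtain p where p: "prime p" "p dvd n" using prime_factor_nat by blast
    then obtain n' where n': "n = p * n'" by blast
    have "n' \<noteq> 0" using n' \<open>n \<noteq> 0\<close> by auto
    have "bigOmega n = bigOmega n' + 1" unfolding bigOmega_def n'
      using p \<open>n' \<noteq> 0\<close> prime_factorization_mult[of p n'] prime_factorization_prime[of p]
      by (simp add: prime_gt_0_nat)
    then have "k + 1 \<le> bigOmega n'" using h by simp
    then obtain u v where uv: "n' = u * v" "2 ^ k \<le> u" "v \<ge> 2" using Suc by blast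
    have "2 * 2 ^ k \<le> p * u" using uv(2) prime_ge_2_nat[OF p(1)] by (intro mult_mono) auto
    thus "\<exists>u v. n = u * v \<and> 2 ^ Suc k \<le> u \<and> v \<ge> 2"
      using uv n' by (intro exI[of _ "p*u"] exI[of _ v]) auto
  qed
qed

lemma nth_prime_prime: "prime (nth_prime j)"
  unfolding nth_prime_def using enumerate_in_set[OF primes_infinite] by auto

lemma nth_prime_mono: "1 \<le> i \<Longrightarrow> i < j \<Longrightarrow> nth_prime i < nth_prime j"
  unfolding nth_prime_def using enumerate_mono[OF _ primes_infinite] by simp

theorem lemma2p2:
  fixes N k j :: nat
  assumes "N \<ge> 2" and "k \<ge> 1"
    and "1 \<le> j" and "j \<le> card (prime_factors (mN N))"
    and "real (nth_prime j) >
         real (nth_prime (card (prime_factors (mN N)) + 1)) powr (1 / 2 ^ k)"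
  shows "bigOmega (multiplicity (nth_prime j) (mN N) + 1) \<le> k"
proof (rule ccontr)
  define m where "m = mN N"
  define r where "r = card (prime_factors m)"
  define p where "p = nth_prime j"
  define q where "q = nth_prime (r + 1)"
  define \<alpha> where "\<alpha> = multiplicity p m"
  assume "\<not> ?thesis"
  hence "k + 1 \<le> bigOmega (\<alpha> + 1)" unfolding \<alpha>_def p_def m_def by simp
  then obtain u v where uv: "\<alpha> + 1 = u * v" "2 ^ k \<le> u" "v \<ge> 2" using omega_split by blast
  have pp: "prime p" unfolding p_def by (rule nth_prime_prime)
  have p2: "p \<ge> 2" using pp prime_ge_2_nat by blast
  have ex: "(2::nat) ^ (N - 1) \<ge> 1 \<and> ndivisors (2 ^ (N - 1)) = N"
    using nd_primepow[of 2 "N - 1"] assms(1) by (simp add: one_le_power)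
  have mprop: "m \<ge> 1 \<and> ndivisors m = N" unfolding m_def mN_def by (rule LeastI, rule ex)
  have mleast: "\<And>m'. m' \<ge> 1 \<Longrightarrow> ndivisors m' = N \<Longrightarrow> m \<le> m'"
    unfolding m_def mN_def by (rule Least_le) simp
  have m0: "m > 0" using mprop by simp
  have inj: "inj_on nth_prime {1..r+1}"
  proof (rule inj_onI)
    fix a b assume "a \<in> {1..r+1}" "b \<in> {1..r+1}" "nth_prime a = nth_prime b"
    thus "a = b" using nth_prime_mono[of a b] nth_prime_mono[of b a]
      by (metis atLeastAtMost_iff less_irrefl linorder_neqE_nat)
  qed
  have "card (nth_prime ` {1..r+1}) = r + 1" using card_image[OF inj] by simp
  hence "\<not> nth_prime ` {1..r+1} \<subseteq> prime_factors m"
    using card_mono[of "prime_factors m" "nth_prime ` {1..r+1}"] unfolding r_def by auto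
  then obtain i where i: "i \<in> {1..r+1}" "nth_prime i \<notin> prime_factors m" by blast
  define q' where "q' = nth_prime i"
  have qp: "prime q'" unfolding q'_def by (rule nth_prime_prime)
  have qndvd: "\<not> q' dvd m" using i(2) qp m0 unfolding q'_def by (auto simp: in_prime_factors_iff)
  have "q' \<le> q" unfolding q'_def q_def using i(1) nth_prime_mono[of i "r+1"]
    by (cases "i = r + 1") auto
  have qpos: "real q > 0" using nth_prime_prime[of "r+1"] prime_gt_0_nat unfolding q_def by simp
  have "real p > real q powr (1 / 2 ^ k)" using assms(5) unfolding p_def q_def r_def m_def .
  hence "real p powr (2 ^ k) > (real q powr (1 / 2 ^ k)) powr (2 ^ k)"
    by (intro powr_less_mono2) auto
  also have "(real q powr (1 / 2 ^ k)) powr (2 ^ k) = real q"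
    using qpos by (simp add: powr_powr)
  finally have "real q < real p powr (2 ^ k)" .
  also have "real p powr (2 ^ k) = real (p ^ (2 ^ k))"
  proof -
    have "real p powr (2 ^ k) = real p powr real (2 ^ k)" by simp
    also have "\<dots> = real p ^ (2 ^ k)" using p2 by (intro powr_realpow) auto
    finally show ?thesis by simp
  qed
  finally have "q < p ^ (2 ^ k)" by linarith
  also have "p ^ (2 ^ k) \<le> p ^ u" using uv(2) p2 by (intro power_increasing) auto
  finally have qlt: "q' < p ^ u" using \<open>q' \<le> q\<close> by linarith
  have "p \<noteq> 1" using p2 by simp
  then obtain m1 where m1: "m = p ^ \<alpha> * m1" "\<not> p dvd m1"
    using multiplicity_decompose'[of m p] m0 unfolding \<alpha>_def by auto
  have m1pos: "m1 > 0" using m1 m0 by (cases "m1 = 0") auto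
  have u1: "u \<ge> 1" using uv(2) by (metis le_trans one_le_power one_le_numeral)
  have "\<alpha> \<ge> 1" using uv u1 by (metis add_le_cancel_right le_add2 mult_le_mono one_add_one le_trans mult_1 numeral_le_iff semiring_norm(69) Suc_eq_plus1 Suc_le_mono not_less_eq_eq)
  hence "p dvd m" using m1(1) by (simp add: dvd_power)
  hence "p \<noteq> q'" using qndvd by auto
  have cm1p: "coprime m1 p" using m1(2) pp by (metis prime_imp_coprime coprime_commute)
  have "\<not> q' dvd m1" using qndvd m1(1) by auto
  hence cm1q: "coprime m1 q'" using qp by (metis prime_imp_coprime coprime_commute)
  have cpq: "coprime p q'" using pp qp \<open>p \<noteq> q'\<close> by (simp add: primes_coprime)
  define m' where "m' = m1 * p ^ (u - 1) * q' ^ (v - 1)"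
  have c1: "coprime m1 (p ^ (u - 1))" using cm1p by simp
  have c2: "coprime (m1 * p ^ (u - 1)) (q' ^ (v - 1))" using cm1q cpq by simp
  have ppos: "p > 0" "q' > 0" using p2 qp prime_gt_0_nat by auto
  have "ndivisors m' = ndivisors m1 * u * v"
    unfolding m'_def using nd_mult[OF c2] nd_mult[OF c1] m1pos ppos nd_primepow[OF pp] nd_primepow[OF qp]
      u1 uv(3) by simp
  also have "\<dots> = ndivisors m1 * (\<alpha> + 1)" using uv(1) by simp
  also have "\<dots> = ndivisors m" using m1(1) nd_mult[of m1 "p ^ \<alpha>"] cm1p m1pos ppos nd_primepow[OF pp]
    by (simp add: mult.commute)
  finally have ndm': "ndivisors m' = N" using mprop by simp
  have m'pos: "m' \<ge> 1" unfolding m'_def using m1pos ppos by simp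
  have "q' ^ (v - 1) < (p ^ u) ^ (v - 1)" using qlt uv(3) by (intro power_strict_mono) auto
  hence "p ^ (u - 1) * q' ^ (v - 1) < p ^ (u - 1) * (p ^ u) ^ (v - 1)" using ppos by simp
  also have "p ^ (u - 1) * (p ^ u) ^ (v - 1) = p ^ \<alpha>"
  proof -
    have "\<alpha> = (u - 1) + u * (v - 1)" using uv(1) u1 uv(3)
      by (simp add: algebra_simps diff_mult_distrib2)
    thus ?thesis by (simp add: power_add power_mult)
  qed
  finally have "m' < m" unfolding m'_def m1(1) using m1pos
    by (metis mult.assoc mult.commute mult_less_cancel1)
  with mleast[OF m'pos ndm'] show False by simp
qed

end
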